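(* Let $k>0$ and consider the system of ODEs, in cylindrical coordinates $(r,\theta,z)$ on $\mathbb{R}^3$ with momenta $p_R,p_S$, \[ \dot r = p_R,\quad \dot\theta = \frac{p_S}{r^2},\quad \dot z = \frac{p_S}{2},\quad \dot p_R = \frac{p_S^2}{r^3} - \frac{2kr^3}{(r^4+16z^2)^{3/2}},\quad \dot p_S = -\frac{8kr^2 z}{(r^4+16z^2)^{3/2}}, \] with energy $H = \frac12\big(p_R^2+\frac{p_S^2}{r^2}\big) - \frac{k}{\sqrt{r^4+16z^2}}$ and first integral $F_3 = (2zp_R-rp_S)^2 + 4z^2\big(\frac{p_S^2}{r^2}+\frac{2k}{\sqrt{r^4+16z^2}}\big)$. The only trajectories of this system passing through the origin are straight lines in the plane $z=0$; along them $\theta$ is constant and $r(t)$ satisfies $\frac{\dot r^2}{2} = H + \frac{k}{r^2}$. These trajectories are exactly those with $F_3 = 0$.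
   Context: The system describes nonholonomic motion on the Heisenberg group in the potential $-k/\sqrt{r^4+16z^2}$ in cylindrical coordinates $x=r\cos\theta$, $y=r\sin\theta$. *)

theory Defs
  imports "HOL-Analysis.Analysis"
begin

text \<open>Nonholonomic Kepler-type system on the Heisenberg group in cylindrical
coordinates (r, theta, z) with momenta pR, pS.\<close>

definition energyH :: "real \<Rightarrow> real \<Rightarrow> real \<Rightarrow> real \<Rightarrow> real \<Rightarrow> real" where
  "energyH k r z pR pS = (pR\<^sup>2 + pS\<^sup>2 / r\<^sup>2) / 2 - k / sqrt (r^4 + 16 * z\<^sup>2)"

definition integralF3 :: "real \<Rightarrow> real \<Rightarrow> real \<Rightarrow> real \<Rightarrow> real \<Rightarrow> real" where
  "integralF3 k r z pR pS =
     (2 * z * pR - r * pS)\<^sup>2 + 4 * z\<^sup>2 * (pS\<^sup>2 / r\<^sup>2 + 2 * k / sqrt (r^4 + 16 * z\<^sup>2))"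

text \<open>A solution of the system on an open interval I (the system is only defined for r > 0).\<close>
definition is_solution ::
  "real \<Rightarrow> real set \<Rightarrow> (real \<Rightarrow> real) \<Rightarrow> (real \<Rightarrow> real) \<Rightarrow> (real \<Rightarrow> real)
     \<Rightarrow> (real \<Rightarrow> real) \<Rightarrow> (real \<Rightarrow> real) \<Rightarrow> bool" where
  "is_solution k I r \<theta> z pR pS \<longleftrightarrow>
     I \<noteq> {} \<and> open I \<and> is_interval I \<and>
     (\<forall>t\<in>I. r t > 0 \<and>
        (r has_real_derivative pR t) (at t) \<and>
        (\<theta> has_real_derivative pS t / (r t)\<^sup>2) (at t) \<and>
        (z has_real_derivative pS t / 2) (at t) \<and>
        (pR has_real_derivative
           (pS t)\<^sup>2 / (r t)^3 - 2 * k * (r t)^3 / ((r t)^4 + 16 * (z t)\<^sup>2) powr (3/2)) (at t) \<and>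
        (pS has_real_derivative
           - (8 * k * (r t)\<^sup>2 * z t) / ((r t)^4 + 16 * (z t)\<^sup>2) powr (3/2)) (at t))"

definition is_maximal_solution ::
  "real \<Rightarrow> real set \<Rightarrow> (real \<Rightarrow> real) \<Rightarrow> (real \<Rightarrow> real) \<Rightarrow> (real \<Rightarrow> real)
     \<Rightarrow> (real \<Rightarrow> real) \<Rightarrow> (real \<Rightarrow> real) \<Rightarrow> bool" where
  "is_maximal_solution k I r \<theta> z pR pS \<longleftrightarrow>
     is_solution k I r \<theta> z pR pS \<and>
     (\<forall>J r' \<theta>' z' pR' pS'. is_solution k J r' \<theta>' z' pR' pS' \<and> I \<subseteq> J \<and>
        (\<forall>t\<in>I. r' t = r t \<and> \<theta>' t = \<theta> t \<and> z' t = z t \<and> pR' t = pR t \<and> pS' t = pS t)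
        \<longrightarrow> J = I)"

text \<open>The trajectory passes through the origin: at some (finite) endpoint t0 of its
interval of definition, r and z tend to 0.\<close>
definition passes_origin :: "real set \<Rightarrow> (real \<Rightarrow> real) \<Rightarrow> (real \<Rightarrow> real) \<Rightarrow> bool" where
  "passes_origin I r z \<longleftrightarrow>
     (\<exists>t0. t0 \<in> closure I \<and> t0 \<notin> I \<and>
        (r \<longlongrightarrow> 0) (at t0 within I) \<and> (z \<longlongrightarrow> 0) (at t0 within I))"

end

theory Submission imports Defs begin

lemma powr32: "(x::real) > 0 \<Longrightarrow> x powr (3/2) = sqrt x ^ 3"
proof -
  assume "x > 0"
  have "sqrt x ^ 3 = (x powr (1/2)) ^ 3" using powr_half_sqrt[of x] \<open>x>0\<close> by simp
  also have "\<dots> = x powr (3/2)" using \<open>x>0\<close> by (simp add: powr_realpow[symmetric] powr_powr)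
  finally show ?thesis by simp
qed

lemma sol_at:
  assumes sol: "is_solution k I r \<theta> z pR pS" and t: "t \<in> I"
  shows "r t > 0" "(r has_real_derivative pR t) (at t)"
        "(\<theta> has_real_derivative pS t / (r t)\<^sup>2) (at t)"
        "(z has_real_derivative pS t / 2) (at t)"
        "(pR has_real_derivative
           (pS t)\<^sup>2 / (r t)^3 - 2 * k * (r t)^3 / (sqrt ((r t)^4 + 16 * (z t)\<^sup>2))^3) (at t)"
        "(pS has_real_derivative
           - (8 * k * (r t)\<^sup>2 * z t) / (sqrt ((r t)^4 + 16 * (z t)\<^sup>2))^3) (at t)"
proof -
  have A: "r t > 0 \<and>
        (r has_real_derivative pR t) (at t) \<and>
        (\<theta> has_real_derivative pS t / (r t)\<^sup>2) (at t) \<and>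
        (z has_real_derivative pS t / 2) (at t) \<and>
        (pR has_real_derivative
           (pS t)\<^sup>2 / (r t)^3 - 2 * k * (r t)^3 / ((r t)^4 + 16 * (z t)\<^sup>2) powr (3/2)) (at t) \<and>
        (pS has_real_derivative
           - (8 * k * (r t)\<^sup>2 * z t) / ((r t)^4 + 16 * (z t)\<^sup>2) powr (3/2)) (at t)"
    using sol t unfolding is_solution_def by blast
  have p: "(r t)^4 + 16 * (z t)\<^sup>2 > 0" using A by (simp add: add_pos_nonneg)
  show "r t > 0" "(r has_real_derivative pR t) (at t)"
        "(\<theta> has_real_derivative pS t / (r t)\<^sup>2) (at t)"
        "(z has_real_derivative pS t / 2) (at t)"
    using A by auto
  show "(pR has_real_derivative
           (pS t)\<^sup>2 / (r t)^3 - 2 * k * (r t)^3 / (sqrt ((r t)^4 + 16 * (z t)\<^sup>2))^3) (at t)"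
        "(pS has_real_derivative
           - (8 * k * (r t)\<^sup>2 * z t) / (sqrt ((r t)^4 + 16 * (z t)\<^sup>2))^3) (at t)"
    using A powr32[OF p] by auto
qed

lemma S_deriv:
  assumes sol: "is_solution k I r \<theta> z pR pS" and t: "t \<in> I"
  shows "((\<lambda>t. sqrt ((r t)^4 + 16 * (z t)\<^sup>2)) has_real_derivative
           (4 * (r t)^3 * pR t + 16 * z t * pS t) / (2 * sqrt ((r t)^4 + 16 * (z t)\<^sup>2))) (at t)"
proof -
  note d = sol_at[OF sol t]
  have p: "(r t)^4 + 16 * (z t)\<^sup>2 > 0" using d by (simp add: add_pos_nonneg)
  have dQ: "((\<lambda>t. (r t)^4 + 16 * (z t)\<^sup>2) has_real_derivative (4 * (r t)^3 * pR t + 16 * z t * pS t)) (at t)"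
    by (rule derivative_eq_intros d(2-6) refl)+ (simp add: field_simps)
  show ?thesis
    using DERIV_chain2[OF DERIV_real_sqrt[OF p] dQ] by (simp add: field_simps)
qed

lemma energy_deriv:
  assumes sol: "is_solution k I r \<theta> z pR pS" and t: "t \<in> I"
  shows "((\<lambda>t. energyH k (r t) (z t) (pR t) (pS t)) has_real_derivative 0) (at t)"
proof -
  note d = sol_at[OF sol t]
  define Sf where "Sf = (\<lambda>t. sqrt ((r t)^4 + 16 * (z t)\<^sup>2))"
  note dS = S_deriv[OF sol t, folded Sf_def]
  have p: "(r t)^4 + 16 * (z t)\<^sup>2 > 0" using d by (simp add: add_pos_nonneg)
  have S: "Sf t > 0" "(Sf t)^2 = (r t)^4 + 16 * (z t)\<^sup>2" using p by (auto simp: Sf_def)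
  have e: "(\<lambda>t. energyH k (r t) (z t) (pR t) (pS t)) = (\<lambda>t. ((pR t)\<^sup>2 + (pS t)\<^sup>2 / (r t)\<^sup>2) / 2 - k / Sf t)"
    by (simp add: energyH_def Sf_def)
  define Q where "Q = (r t)^4 + 16 * (z t)\<^sup>2"
  have a: "sqrt ((r t)^4 + 16 * (z t)\<^sup>2) = Sf t" by (simp add: Sf_def)
  have b: "(Sf t)^3 = Sf t * ((r t)^4 + 16 * (z t)\<^sup>2)" "Sf t * Sf t = (r t)^4 + 16 * (z t)\<^sup>2"
      using S by (simp_all add: power3_eq_cube power2_eq_square)
  show ?thesis unfolding e
    apply (rule derivative_eq_intros dS d(2-6) refl | (use d(1) S(1) in simp; fail))+
    apply (simp only: a b)
    using S(1) p d(1) unfolding Q_def[symmetric] apply (simp add: field_simps)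
    unfolding Q_def by (simp add: algebra_simps eval_nat_numeral)
qed

lemma F3_deriv:
  assumes sol: "is_solution k I r \<theta> z pR pS" and t: "t \<in> I"
  shows "((\<lambda>t. integralF3 k (r t) (z t) (pR t) (pS t)) has_real_derivative 0) (at t)"
proof -
  note d = sol_at[OF sol t]
  define Sf where "Sf = (\<lambda>t. sqrt ((r t)^4 + 16 * (z t)\<^sup>2))"
  note dS = S_deriv[OF sol t, folded Sf_def]
  have p: "(r t)^4 + 16 * (z t)\<^sup>2 > 0" using d by (simp add: add_pos_nonneg)
  have S: "Sf t > 0" "(Sf t)^2 = (r t)^4 + 16 * (z t)\<^sup>2" using p by (auto simp: Sf_def)
  have e: "(\<lambda>t. integralF3 k (r t) (z t) (pR t) (pS t)) = (\<lambda>t. (2 * z t * pR t - r t * pS t)\<^sup>2 + 4 * (z t)\<^sup>2 * ((pS t)\<^sup>2 / (r t)\<^sup>2 + 2 * k / Sf t))"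
    by (simp add: integralF3_def Sf_def)
  define Q where "Q = (r t)^4 + 16 * (z t)\<^sup>2"
  have a: "sqrt ((r t)^4 + 16 * (z t)\<^sup>2) = Sf t" by (simp add: Sf_def)
  have b: "(Sf t)^3 = Sf t * ((r t)^4 + 16 * (z t)\<^sup>2)" "Sf t * Sf t = (r t)^4 + 16 * (z t)\<^sup>2"
      using S by (simp_all add: power3_eq_cube power2_eq_square)
  show ?thesis unfolding e
    apply (rule derivative_eq_intros dS d(2-6) refl | (use d(1) S(1) in simp; fail))+
    apply (simp only: a b)
    using S(1) p d(1) unfolding Q_def[symmetric] apply (simp add: field_simps)
    unfolding Q_def by (simp add: algebra_simps eval_nat_numeral)
qed

lemma const_on:
  fixes f :: "real \<Rightarrow> real"
  assumes "is_interval I" "\<And>t. t \<in> I \<Longrightarrow> (f has_real_derivative 0) (at t)"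
  shows "\<exists>c. \<forall>t\<in>I. f t = c"
  using has_field_derivative_zero_constant[of I f] assms is_interval_convex has_field_derivative_at_within
  by blast

lemma F3_bound:
  fixes k r z pR pS E :: real
  assumes k: "k > 0" and r: "r > 0" and H: "energyH k r z pR pS = E"
  shows "integralF3 k r z pR pS \<le> (16*\<bar>E\<bar>+6*k)*(\<bar>z\<bar> + z\<^sup>2 + r\<^sup>2 + r^4)"
proof -
  define S where "S = sqrt (r^4 + 16 * z\<^sup>2)"
  define a where "a = pR\<^sup>2"
  define b where "b = pS\<^sup>2 / r\<^sup>2"
  have a0: "a \<ge> 0" and b0: "b \<ge> 0" by (auto simp: a_def b_def)
  have Sr: "r\<^sup>2 \<le> S" unfolding S_def by (rule real_le_rsqrt) (simp flip: power_mult)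
  have Sz: "4 * \<bar>z\<bar> \<le> S" unfolding S_def by (rule real_le_rsqrt) (simp add: power2_eq_square)
  have S0: "S > 0" using Sr r by (metis less_le_trans zero_less_power)
  have hP: "a + b = 2*E + 2*k/S" using H by (simp add: energyH_def a_def b_def S_def field_simps)
  have h1: "(2 * z * pR - r * pS)\<^sup>2 \<le> 8 * z\<^sup>2 * a + 2 * r^4 * b"
  proof -
    have "\<And>x y::real. x\<^sup>2 * 2 + y\<^sup>2 * 2 - (x - y)\<^sup>2 = (x + y)\<^sup>2"
      by (simp add: power2_eq_square algebra_simps)
    hence "\<And>x y::real. (x - y)\<^sup>2 \<le> 2 * x\<^sup>2 + 2 * y\<^sup>2"
      by (metis diff_ge_0_iff_ge mult.commute zero_le_power2)
    hence "(2 * z * pR - r * pS)\<^sup>2 \<le> 2 * (2 * z * pR)\<^sup>2 + 2 * (r * pS)\<^sup>2" .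
    moreover have "(r * pS)\<^sup>2 = r^4 * b" using r by (simp add: b_def field_simps eval_nat_numeral)
    ultimately show ?thesis by (simp add: a_def power_mult_distrib)
  qed
  have F: "integralF3 k r z pR pS = (2 * z * pR - r * pS)\<^sup>2 + 4 * z\<^sup>2 * b + 8 * k * (z\<^sup>2 / S)"
    by (simp add: integralF3_def b_def S_def algebra_simps)
  have p1: "z\<^sup>2 * b \<ge> 0" "r^4 * a \<ge> 0" using a0 b0 by auto
  have h2: "integralF3 k r z pR pS \<le> 8 * z\<^sup>2 * (a+b) + 2 * r^4 * (a+b) + 8 * k * (z\<^sup>2 / S)"
    using F h1 p1 by (simp add: algebra_simps)
  have h3: "z\<^sup>2 / S \<le> \<bar>z\<bar> / 4"
  proof -
    have "\<bar>z\<bar> * \<bar>z\<bar> \<le> \<bar>z\<bar> * (S/4)" using Sz by (intro mult_left_mono) auto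
    then show ?thesis using S0 by (simp add: divide_le_eq power2_eq_square field_simps)
  qed
  have h4: "r^4 / S \<le> r\<^sup>2"
  proof -
    have "r\<^sup>2 * r\<^sup>2 \<le> r\<^sup>2 * S" using Sr by (intro mult_left_mono) auto
    then show ?thesis using S0 by (simp add: divide_le_eq eval_nat_numeral field_simps)
  qed
  define X where "X = z\<^sup>2 / S"
  define Y where "Y = r^4 / S"
  have e: "8 * z\<^sup>2 * (a+b) + 2 * r^4 * (a+b) + 8 * k * (z\<^sup>2 / S)
      = 16 * (E * z\<^sup>2) + 24 * (k * X) + 4 * (E * r^4) + 4 * (k * Y)"
    unfolding hP X_def Y_def using S0 by (simp add: field_simps)
  have m1: "E * z\<^sup>2 \<le> \<bar>E\<bar> * z\<^sup>2" "E * r^4 \<le> \<bar>E\<bar> * r^4"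
    by (auto intro: mult_right_mono)
  have m2a: "k * X \<le> k * (\<bar>z\<bar> / 4)" unfolding X_def using mult_left_mono[OF h3, of k] k by auto
  have m2b: "k * Y \<le> k * r\<^sup>2" unfolding Y_def using mult_left_mono[OF h4, of k] k by auto
  have m2: "4 * (k * X) \<le> k * \<bar>z\<bar>" using m2a by (simp add: algebra_simps)
  have m3: "\<bar>E\<bar> * \<bar>z\<bar> \<ge> 0" "\<bar>E\<bar> * r\<^sup>2 \<ge> 0" "k * z\<^sup>2 \<ge> 0" "k * r^4 \<ge> 0" "\<bar>E\<bar> * r^4 \<ge> 0" "\<bar>E\<bar> * z\<^sup>2 \<ge> 0"
    using k by auto
  have ex: "(16*\<bar>E\<bar>+6*k)*(\<bar>z\<bar> + z\<^sup>2 + r\<^sup>2 + r^4) = 16*(\<bar>E\<bar>*\<bar>z\<bar>) + 16*(\<bar>E\<bar>*z\<^sup>2) + 16*(\<bar>E\<bar>*r\<^sup>2)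
     + 16*(\<bar>E\<bar>*r^4) + 6*(k*\<bar>z\<bar>) + 6*(k*z\<^sup>2) + 6*(k*r\<^sup>2) + 6*(k*r^4)"
    by (simp add: algebra_simps)
  have k1: "k * \<bar>z\<bar> \<ge> 0" "k * r\<^sup>2 \<ge> 0" using k by auto
  show ?thesis unfolding ex using h2 e m1 m2 m2b m3 k1 by linarith
qed

lemma F3_zero:
  fixes k r z pR pS :: real
  assumes k: "k > 0" and r: "r > 0" and F: "integralF3 k r z pR pS = 0"
  shows "z = 0 \<and> pS = 0"
proof -
  define S where "S = sqrt (r^4 + 16 * z\<^sup>2)"
  have S0: "S > 0" unfolding S_def using r by (simp add: add_pos_nonneg)
  have t1: "(2 * z * pR - r * pS)\<^sup>2 \<ge> 0" "4 * z\<^sup>2 * (pS\<^sup>2 / r\<^sup>2) \<ge> 0" by auto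
  have t2: "4 * z\<^sup>2 * (2 * k / S) \<ge> 0" using S0 k by auto
  have F': "(2 * z * pR - r * pS)\<^sup>2 + 4 * z\<^sup>2 * (pS\<^sup>2 / r\<^sup>2) + 4 * z\<^sup>2 * (2 * k / S) = 0"
    using F by (simp add: integralF3_def S_def algebra_simps)
  have "4 * z\<^sup>2 * (2 * k / S) = 0" using F' t1 t2 by linarith
  hence z: "z = 0" using S0 k by simp
  have "(r * pS)\<^sup>2 = 0" using F' t1 t2 z by simp
  thus ?thesis using z r by simp
qed

lemma F3_nonneg:
  fixes k r z pR pS :: real
  assumes k: "k > 0" and r: "r > 0"
  shows "integralF3 k r z pR pS \<ge> 0"
proof -
  have S0: "sqrt (r^4 + 16 * z\<^sup>2) > 0" using r by (simp add: add_pos_nonneg)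
  thus ?thesis unfolding integralF3_def using k by (intro add_nonneg_nonneg mult_nonneg_nonneg) auto
qed

lemma sol_interval: "is_solution k I r \<theta> z pR pS \<Longrightarrow> is_interval I \<and> open I \<and> I \<noteq> {}"
  unfolding is_solution_def by blast

lemma F3_zero_cons:
  assumes k: "k > 0" and sol: "is_solution k I r \<theta> z pR pS"
    and F: "\<forall>t\<in>I. integralF3 k (r t) (z t) (pR t) (pS t) = 0"
  shows "(\<forall>t\<in>I. z t = 0 \<and> pS t = 0) \<and> (\<forall>s\<in>I. \<forall>t\<in>I. \<theta> s = \<theta> t) \<and>
         (\<exists>E. \<forall>t\<in>I. energyH k (r t) (z t) (pR t) (pS t) = E \<and> (pR t)\<^sup>2 / 2 = E + k / (r t)\<^sup>2)"
proof -
  have zp: "\<forall>t\<in>I. z t = 0 \<and> pS t = 0" using F F3_zero[OF k] sol_at(1)[OF sol] by blast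
  have iv: "is_interval I" using sol_interval[OF sol] by blast
  obtain c where c: "\<forall>t\<in>I. \<theta> t = c"
  proof -
    have "\<exists>c. \<forall>t\<in>I. \<theta> t = c"
    proof (rule const_on[OF iv])
      fix t assume t: "t \<in> I"
      show "(\<theta> has_real_derivative 0) (at t)" using sol_at(3)[OF sol t] zp t by simp
    qed
    thus ?thesis using that by blast
  qed
  obtain E where E: "\<forall>t\<in>I. energyH k (r t) (z t) (pR t) (pS t) = E"
    using const_on[OF iv energy_deriv[OF sol]] by blast
  have "\<forall>t\<in>I. (pR t)\<^sup>2 / 2 = E + k / (r t)\<^sup>2"
  proof
    fix t assume t: "t \<in> I"
    have r0: "r t > 0" using sol_at(1)[OF sol t] .
    have sq: "sqrt ((r t)^4) = (r t)\<^sup>2"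
      by (metis abs_of_nonneg power_mult real_sqrt_abs zero_le_power2 num_double numeral_times_numeral)
    have "energyH k (r t) (z t) (pR t) (pS t) = (pR t)\<^sup>2 / 2 - k / (r t)\<^sup>2"
      using zp t sq by (simp add: energyH_def)
    thus "(pR t)\<^sup>2 / 2 = E + k / (r t)\<^sup>2" using E t by simp
  qed
  thus ?thesis using zp c E by auto
qed

lemma origin_F3:
  assumes k: "k > 0" and sol: "is_solution k I r \<theta> z pR pS" and po: "passes_origin I r z"
  shows "\<forall>t\<in>I. integralF3 k (r t) (z t) (pR t) (pS t) = 0"
proof -
  have iv: "is_interval I" using sol_interval[OF sol] by blast
  obtain c where c: "\<forall>t\<in>I. integralF3 k (r t) (z t) (pR t) (pS t) = c"
    using const_on[OF iv F3_deriv[OF sol]] by blast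
  obtain E where E: "\<forall>t\<in>I. energyH k (r t) (z t) (pR t) (pS t) = E"
    using const_on[OF iv energy_deriv[OF sol]] by blast
  obtain t0 where t0: "t0 \<in> closure I" "t0 \<notin> I" "(r \<longlongrightarrow> 0) (at t0 within I)" "(z \<longlongrightarrow> 0) (at t0 within I)"
    using po unfolding passes_origin_def by blast
  define C where "C = 16*\<bar>E\<bar>+6*k"
  have ev: "eventually (\<lambda>t. t \<in> I) (at t0 within I)" by (simp add: eventually_at_filter)
  have lim1: "((\<lambda>t. integralF3 k (r t) (z t) (pR t) (pS t)) \<longlongrightarrow> 0) (at t0 within I)"
  proof (rule tendsto_sandwich[of "\<lambda>_. 0" _ _ "\<lambda>t. C*(\<bar>z t\<bar> + (z t)\<^sup>2 + (r t)\<^sup>2 + (r t)^4)"])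
    show "eventually (\<lambda>t. 0 \<le> integralF3 k (r t) (z t) (pR t) (pS t)) (at t0 within I)"
      using ev by eventually_elim (use F3_nonneg[OF k] sol_at(1)[OF sol] in blast)
    show "eventually (\<lambda>t. integralF3 k (r t) (z t) (pR t) (pS t) \<le> C*(\<bar>z t\<bar> + (z t)\<^sup>2 + (r t)\<^sup>2 + (r t)^4)) (at t0 within I)"
      using ev by eventually_elim (use F3_bound[OF k] sol_at(1)[OF sol] E C_def in blast)
    show "((\<lambda>_. 0::real) \<longlongrightarrow> 0) (at t0 within I)" by simp
    have "((\<lambda>t. C*(\<bar>z t\<bar> + (z t)\<^sup>2 + (r t)\<^sup>2 + (r t)^4)) \<longlongrightarrow> C*(\<bar>0\<bar> + 0\<^sup>2 + 0\<^sup>2 + 0^4)) (at t0 within I)"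
      by (intro tendsto_intros t0(3,4))
    thus "((\<lambda>t. C*(\<bar>z t\<bar> + (z t)\<^sup>2 + (r t)\<^sup>2 + (r t)^4)) \<longlongrightarrow> 0) (at t0 within I)" by simp
  qed
  have lim2: "((\<lambda>t. integralF3 k (r t) (z t) (pR t) (pS t)) \<longlongrightarrow> c) (at t0 within I)"
  proof -
    have "eventually (\<lambda>t. integralF3 k (r t) (z t) (pR t) (pS t) = c) (at t0 within I)"
      using ev by eventually_elim (use c in blast)
    thus ?thesis using tendsto_cong[of _ "\<lambda>_. c"] by (metis tendsto_const)
  qed
  have nt: "at t0 within I \<noteq> bot"
    using t0(1,2) by (simp add: trivial_limit_within closure_def)
  have "c = 0" using tendsto_unique[OF nt lim2 lim1] .
  thus ?thesis using c by simp
qed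


lemma quad_root:
  fixes E b c0 k :: real
  assumes k: "k > 0" and D: "b\<^sup>2 - 8 * E * c0 = 8 * k"
  shows "\<exists>x. 2 * E * x\<^sup>2 + b * x + c0 = 0"
proof (cases "E = 0")
  case True
  hence "b \<noteq> 0" using D k by auto
  thus ?thesis using True by (intro exI[of _ "- c0 / b"]) simp
next
  case False
  define s where "s = sqrt (b\<^sup>2 - 8 * E * c0)"
  have s2: "s\<^sup>2 = b\<^sup>2 - 8 * E * c0" unfolding s_def using D k by simp
  show ?thesis
  proof (intro exI[of _ "(- b + s) / (4 * E)"])
    have "2 * E * ((- b + s) / (4 * E))\<^sup>2 + b * ((- b + s) / (4 * E)) + c0
        = ((s\<^sup>2 - b\<^sup>2) + 8 * E * c0) / (8 * E)"
      using False by (simp add: field_simps power2_eq_square)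
    also have "\<dots> = 0" using s2 by simp
    finally show "2 * E * ((- b + s) / (4 * E))\<^sup>2 + b * ((- b + s) / (4 * E)) + c0 = 0" .
  qed
qed

lemma pR_alg:
  fixes E d s k :: real
  assumes s: "s > 0" and d: "d\<^sup>2 - 8 * E * s\<^sup>2 = 8 * k"
  shows "(4 * E * (2 * s) - d * (2 * (d / (2 * s)))) / (2 * s)\<^sup>2 = - 2 * k / s^3"
proof -
  have "(4 * E * (2 * s) - d * (2 * (d / (2 * s)))) / (2 * s)\<^sup>2 = (8 * E * s\<^sup>2 - d\<^sup>2) / (4 * s^3)"
    using s by (simp add: field_simps power2_eq_square power3_eq_cube)
  also have "\<dots> = - 2 * k / s^3" using d s by (simp add: field_simps)
  finally show ?thesis .
qed

lemma max_origin:
  assumes k: "k > 0" and ms: "is_maximal_solution k I r \<theta> z pR pS" and t1: "t1 \<in> I"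
    and F1: "integralF3 k (r t1) (z t1) (pR t1) (pS t1) = 0"
  shows "passes_origin I r z"
proof -
  have sol: "is_solution k I r \<theta> z pR pS" using ms unfolding is_maximal_solution_def by blast
  have mx: "\<And>J r' \<theta>' z' pR' pS'. is_solution k J r' \<theta>' z' pR' pS' \<Longrightarrow> I \<subseteq> J \<Longrightarrow>
        (\<forall>t\<in>I. r' t = r t \<and> \<theta>' t = \<theta> t \<and> z' t = z t \<and> pR' t = pR t \<and> pS' t = pS t) \<Longrightarrow> J = I"
    using ms unfolding is_maximal_solution_def by blast
  have iv: "is_interval I" and oI: "open I" using sol_interval[OF sol] by blast+
  obtain c where c: "\<forall>t\<in>I. integralF3 k (r t) (z t) (pR t) (pS t) = c"
    using const_on[OF iv F3_deriv[OF sol]] by blast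
  have F: "\<forall>t\<in>I. integralF3 k (r t) (z t) (pR t) (pS t) = 0" using c F1 t1 by auto
  note cons = F3_zero_cons[OF k sol F]
  have zp: "\<forall>t\<in>I. z t = 0 \<and> pS t = 0" using cons by blast
  have th: "\<forall>t\<in>I. \<theta> t = \<theta> t1" using cons t1 by blast
  obtain E where E: "\<forall>t\<in>I. (pR t)\<^sup>2 / 2 = E + k / (r t)\<^sup>2" using cons by blast
  define b where "b = 2 * r t1 * pR t1"
  define c0 where "c0 = (r t1)\<^sup>2"
  define q where "q = (\<lambda>t. 2 * E * (t - t1)\<^sup>2 + b * (t - t1) + c0)"
  define dq where "dq = (\<lambda>t. 4 * E * (t - t1) + b)"
  have qd: "\<And>t. (q has_real_derivative dq t) (at t)"
    unfolding q_def dq_def by (rule derivative_eq_intros refl)+ (simp add: field_simps)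
  have dqd: "\<And>t. (dq has_real_derivative 4 * E) (at t)"
    unfolding dq_def by (rule derivative_eq_intros refl)+ simp
  have r1: "r t1 > 0" using sol_at(1)[OF sol t1] .
  have D: "b\<^sup>2 - 8 * E * c0 = 8 * k"
  proof -
    have "(pR t1)\<^sup>2 = 2 * E + 2 * k / (r t1)\<^sup>2" using E t1 by (simp add: field_simps)
    hence "(pR t1)\<^sup>2 * (r t1)\<^sup>2 = 2 * E * (r t1)\<^sup>2 + 2 * k" using r1 by (simp add: field_simps)
    thus ?thesis unfolding b_def c0_def by (simp add: power_mult_distrib algebra_simps)
  qed
  have disc: "\<And>t. (dq t)\<^sup>2 - 8 * E * q t = 8 * k"
    using D unfolding q_def dq_def by (simp add: power2_eq_square algebra_simps)
  have pRd: "\<And>t. t \<in> I \<Longrightarrow> (pR has_real_derivative - 2 * k / (r t)^3) (at t)"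
  proof -
    fix t assume t: "t \<in> I"
    have r0: "r t > 0" using sol_at(1)[OF sol t] .
    have sq: "sqrt ((r t)^4) = (r t)\<^sup>2"
      by (metis abs_of_nonneg power_mult real_sqrt_abs zero_le_power2 num_double numeral_times_numeral)
    have "(pS t)\<^sup>2 / (r t)^3 - 2 * k * (r t)^3 / (sqrt ((r t)^4 + 16 * (z t)\<^sup>2))^3 = - 2 * k / (r t)^3"
      using zp t sq r0 by (simp add: field_simps eval_nat_numeral)
    thus "(pR has_real_derivative - 2 * k / (r t)^3) (at t)" using sol_at(5)[OF sol t] by simp
  qed
  have w: "\<forall>t\<in>I. 2 * r t * pR t = dq t"
  proof -
    have "\<exists>c. \<forall>t\<in>I. 2 * r t * pR t - dq t = c"
    proof (rule const_on[OF iv])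
      fix t assume t: "t \<in> I"
      have r0: "r t > 0" using sol_at(1)[OF sol t] .
      have e: "(pR t)\<^sup>2 = 2 * E + 2 * k / (r t)\<^sup>2" using E t by (simp add: field_simps)
      show "((\<lambda>t. 2 * r t * pR t - dq t) has_real_derivative 0) (at t)"
        apply (rule derivative_eq_intros sol_at(2)[OF sol t] pRd[OF t] dqd refl)+
        using r0 e by (simp add: field_simps power2_eq_square power3_eq_cube)
    qed
    then obtain cc where cc: "\<forall>t\<in>I. 2 * r t * pR t - dq t = cc" by blast
    have "2 * r t1 * pR t1 - dq t1 = cc" using cc t1 by blast
    hence "cc = 0" by (simp add: dq_def b_def)
    thus ?thesis using cc by auto
  qed
  have rq: "\<forall>t\<in>I. (r t)\<^sup>2 = q t"
  proof -
    have "\<exists>c. \<forall>t\<in>I. (r t)\<^sup>2 - q t = c"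
    proof (rule const_on[OF iv])
      fix t assume t: "t \<in> I"
      show "((\<lambda>t. (r t)\<^sup>2 - q t) has_real_derivative 0) (at t)"
        apply (rule derivative_eq_intros sol_at(2)[OF sol t] qd refl)+
        using w t by (simp add: algebra_simps)
    qed
    then obtain cc where cc: "\<forall>t\<in>I. (r t)\<^sup>2 - q t = cc" by blast
    have "(r t1)\<^sup>2 - q t1 = cc" using cc t1 by blast
    hence "cc = 0" by (simp add: q_def c0_def)
    thus ?thesis using cc by auto
  qed
  obtain ts where ts: "q ts = 0" using quad_root[OF k D] unfolding q_def
    by (metis add_diff_cancel_left' diff_add_cancel)
  define U where "U = {t. 0 < q t}"
  have contq: "continuous_on UNIV q" unfolding q_def by (intro continuous_intros)
  have oU: "open U" unfolding U_def by (rule open_Collect_less) (auto intro: continuous_intros contq)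
  define J where "J = connected_component_set U t1"
  have IU: "I \<subseteq> U" unfolding U_def using rq sol_at(1)[OF sol] by (metis mem_Collect_eq subsetI zero_less_power)
  have IJ: "I \<subseteq> J" unfolding J_def
    by (rule connected_component_maximal[OF t1 _ IU]) (simp add: iv is_interval_connected)
  have oJ: "open J" unfolding J_def by (rule open_connected_component[OF oU])
  have ivJ: "is_interval J" unfolding J_def using connected_connected_component is_interval_connected_1 by blast
  have JU: "J \<subseteq> U" unfolding J_def by (rule connected_component_subset)
  define rr where "rr = (\<lambda>t. sqrt (q t))"
  define pRR where "pRR = (\<lambda>t. dq t / (2 * sqrt (q t)))"
  have solJ: "is_solution k J rr (\<lambda>_. \<theta> t1) (\<lambda>_. 0) pRR (\<lambda>_. 0)"
    unfolding is_solution_def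
  proof (intro conjI ballI)
    show "J \<noteq> {}" using IJ t1 by blast
    show "open J" by (rule oJ)
    show "is_interval J" by (rule ivJ)
    fix t assume t: "t \<in> J"
    have qt: "q t > 0" using t JU U_def by blast
    show "rr t > 0" unfolding rr_def using qt by simp
    show "(rr has_real_derivative pRR t) (at t)"
      using DERIV_chain2[OF DERIV_real_sqrt[OF qt] qd[of t]] qt
      unfolding rr_def pRR_def by (simp add: field_simps)
    show "((\<lambda>_. \<theta> t1) has_real_derivative 0 / (rr t)\<^sup>2) (at t)" by simp
    show "((\<lambda>_. 0) has_real_derivative 0 / 2) (at t)" by simp
    show "((\<lambda>_. 0) has_real_derivative - (8 * k * (rr t)\<^sup>2 * 0) / ((rr t)^4 + 16 * 0\<^sup>2) powr (3/2)) (at t)" by simp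
    define s where "s = sqrt (q t)"
    have s0: "s > 0" and s2: "s\<^sup>2 = q t" using qt by (auto simp: s_def)
    have ds: "(dq t)\<^sup>2 - 8 * E * s\<^sup>2 = 8 * k" using disc s2 by simp
    have tgt: "0\<^sup>2 / (rr t)^3 - 2 * k * (rr t)^3 / ((rr t)^4 + 16 * 0\<^sup>2) powr (3/2) = - 2 * k / s^3"
    proof -
      have "(s^4) powr (3/2) = s^6"
      proof -
        have "(s^4) powr (3/2) = sqrt (s^4) ^ 3" using s0 by (intro powr32) simp
        also have "sqrt (s^4) = s\<^sup>2"
          by (metis abs_of_nonneg power_mult real_sqrt_abs zero_le_power2 num_double numeral_times_numeral)
        finally show ?thesis by (simp flip: power_mult)
      qed
      thus ?thesis using s0 unfolding rr_def s_def[symmetric] by (simp add: field_simps eval_nat_numeral)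
    qed
    have "(pRR has_real_derivative (4 * E * (2 * s) - dq t * (2 * (dq t / (2 * s)))) / (2 * s)\<^sup>2) (at t)"
      unfolding pRR_def
      apply (rule derivative_eq_intros dqd qd refl | (use qt in simp; fail))+
      unfolding s_def using qt by (simp add: field_simps power2_eq_square)
    thus "(pRR has_real_derivative 0\<^sup>2 / (rr t)^3 - 2 * k * (rr t)^3 / ((rr t)^4 + 16 * 0\<^sup>2) powr (3/2)) (at t)"
      unfolding tgt pR_alg[OF s0 ds] .
  qed
  have agree: "\<forall>t\<in>I. rr t = r t \<and> (\<lambda>_. \<theta> t1) t = \<theta> t \<and> (\<lambda>_. 0) t = z t \<and> pRR t = pR t \<and> (\<lambda>_. 0) t = pS t"
  proof
    fix t assume t: "t \<in> I"
    have r0: "r t > 0" using sol_at(1)[OF sol t] .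
    have a: "rr t = r t" unfolding rr_def using rq t r0 by (metis less_imp_le real_sqrt_unique)
    have "pRR t = pR t" using a w t r0 unfolding pRR_def rr_def by (metis nonzero_mult_div_cancel_left mult.assoc zero_neq_numeral mult_eq_0_iff less_irrefl)
    thus "rr t = r t \<and> (\<lambda>_. \<theta> t1) t = \<theta> t \<and> (\<lambda>_. 0) t = z t \<and> pRR t = pR t \<and> (\<lambda>_. 0) t = pS t"
      using a th zp t by auto
  qed
  have JI: "J = I" using mx[OF solJ IJ agree] .
  have JUNIV: "J \<noteq> UNIV"
  proof
    assume "J = UNIV"
    hence "ts \<in> U" using JU by blast
    thus False using ts U_def by simp
  qed
  obtain t0 where t0: "t0 \<in> frontier J" using frontier_not_empty[OF _ JUNIV] IJ t1 by blast
  have t0U: "t0 \<in> frontier U" using t0 frontier_of_connected_component_subset[of U t1] unfolding J_def by blast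
  have clU: "closure U \<subseteq> {t. 0 \<le> q t}"
    by (rule closure_minimal) (auto simp: U_def intro!: closed_Collect_le continuous_intros contq)
  have "t0 \<in> closure U" "t0 \<notin> interior U" using t0U unfolding frontier_def by auto
  hence "0 \<le> q t0" "t0 \<notin> U" using clU interior_open[OF oU] by auto
  hence qt0: "q t0 = 0" unfolding U_def by simp
  have "t0 \<in> closure J" "t0 \<notin> interior J" using t0 unfolding frontier_def by auto
  hence t0I: "t0 \<in> closure I" "t0 \<notin> I" using JI interior_open[OF oI] by auto
  have ev: "eventually (\<lambda>t. t \<in> I) (at t0 within I)" by (simp add: eventually_at_filter)
  have lr: "((\<lambda>t. sqrt (q t)) \<longlongrightarrow> sqrt (q t0)) (at t0 within I)"
    unfolding q_def by (intro tendsto_intros)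
  hence lr0: "((\<lambda>t. sqrt (q t)) \<longlongrightarrow> 0) (at t0 within I)" using qt0 by simp
  have evr: "eventually (\<lambda>t. sqrt (q t) = r t) (at t0 within I)"
    using ev by eventually_elim (use agree rr_def in auto)
  have "((\<lambda>t. sqrt (q t)) \<longlongrightarrow> 0) (at t0 within I) = ((\<lambda>t. r t) \<longlongrightarrow> 0) (at t0 within I)"
    by (rule tendsto_cong[OF evr])
  hence "(r \<longlongrightarrow> 0) (at t0 within I)" using lr0 by simp
  moreover have "(z \<longlongrightarrow> 0) (at t0 within I)"
  proof -
    have evz: "eventually (\<lambda>t. 0 = z t) (at t0 within I)" using ev by eventually_elim (use zp in auto)
    have "((\<lambda>t. 0::real) \<longlongrightarrow> 0) (at t0 within I) = ((\<lambda>t. z t) \<longlongrightarrow> 0) (at t0 within I)"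
      by (rule tendsto_cong[OF evz])
    thus ?thesis by simp
  qed
  ultimately show ?thesis unfolding passes_origin_def using t0I by blast
qed

theorem theorem4:
  fixes k :: real and I :: "real set" and r \<theta> z pR pS :: "real \<Rightarrow> real"
  assumes "k > 0"
    and sol: "is_solution k I r \<theta> z pR pS"
  shows "(passes_origin I r z \<longrightarrow>
            (\<forall>t\<in>I. z t = 0) \<and>
            (\<forall>s\<in>I. \<forall>t\<in>I. \<theta> s = \<theta> t) \<and>
            (\<exists>E. \<forall>t\<in>I. energyH k (r t) (z t) (pR t) (pS t) = E \<and>
                        (pR t)\<^sup>2 / 2 = E + k / (r t)\<^sup>2) \<and>
            (\<forall>t\<in>I. integralF3 k (r t) (z t) (pR t) (pS t) = 0))
       \<and> (is_maximal_solution k I r \<theta> z pR pS \<longrightarrow>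
            (passes_origin I r z \<longleftrightarrow> (\<exists>t\<in>I. integralF3 k (r t) (z t) (pR t) (pS t) = 0)))"
proof -
  have P1: "(\<forall>t\<in>I. z t = 0) \<and>
            (\<forall>s\<in>I. \<forall>t\<in>I. \<theta> s = \<theta> t) \<and>
            (\<exists>E. \<forall>t\<in>I. energyH k (r t) (z t) (pR t) (pS t) = E \<and>
                        (pR t)\<^sup>2 / 2 = E + k / (r t)\<^sup>2) \<and>
            (\<forall>t\<in>I. integralF3 k (r t) (z t) (pR t) (pS t) = 0)" if po: "passes_origin I r z"
  proof -
    have F: "\<forall>t\<in>I. integralF3 k (r t) (z t) (pR t) (pS t) = 0" using origin_F3[OF assms po] .
    show ?thesis using F3_zero_cons[OF assms F] F by blast
  qed
  have P2: "passes_origin I r z \<longleftrightarrow> (\<exists>t\<in>I. integralF3 k (r t) (z t) (pR t) (pS t) = 0)"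
    if ms: "is_maximal_solution k I r \<theta> z pR pS"
  proof
    assume po: "passes_origin I r z"
    have "I \<noteq> {}" using sol_interval[OF sol] by blast
    thus "\<exists>t\<in>I. integralF3 k (r t) (z t) (pR t) (pS t) = 0" using origin_F3[OF assms po] by blast
  next
    assume "\<exists>t\<in>I. integralF3 k (r t) (z t) (pR t) (pS t) = 0"
    then obtain t1 where "t1 \<in> I" "integralF3 k (r t1) (z t1) (pR t1) (pS t1) = 0" by blast
    thus "passes_origin I r z" using max_origin[OF assms(1) ms] by blast
  qed
  show ?thesis using P1 P2 by blast
qed

end
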